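(* Let $I=(T,((U_1,S_1),\dots,(U_k,S_k)))$ be an instance of \textsc{Generalized Graphic Inverse Voronoi in Trees} with $S_i\subseteq W_i$ for all $i$, let $xy\in E_1$ with $x\in W_1$ and $y\in U_1\setminus W_1$, let $\varepsilon>0$, and let $I'$ be the instance obtained from $I$ by expanding the edge $xy$ from $E_1$ by $\varepsilon$. If $\Sigma=\{s_1,\dots,s_k\}$ (with $s_i\in S_i$) is a solution to $I$, then $\Sigma$ is also a solution to $I'$.
   Context: \textsc{Generalized Graphic Inverse Voronoi in Trees}: input is a tree $T$ with positive edge-lengths $\lambda$ and pairs $(U_1,S_1),\dots,(U_k,S_k)$ of subsets of $V(T)$ with $U_1,\dots,U_k$ covering $V(T)$. A solution is $s_1,\dots,s_k\in V(T)$ with $s_i\in S_i$ and $U_i=\mathrm{cell}_T(s_i,\{s_1,\dots,s_k\})$ for all $i$, where $\mathrm{cell}_T(s,\Sigma)=\{x\in V(T)\mid d_T(s,x)\le d_T(s',x)\ \forall s'\in\Sigma\}$ and $d_T$ is the shortest-path distance. For $i\in[k]$, $W_i=U_i\setminus\bigcup_{j\neq i}U_j$ and $E_i=\{uv\in E(T)\mid u\in W_i,\ v\in U_i\setminus W_i\}$. Expansion of $xy\in E_1$ (with $x\in W_1$, $y\in U_1\setminus W_1$) by $\varepsilon$: $T'$ is obtained from $T$ by subdividing $xy$ with a new vertex $y'$, with lengths $\lambda'(xy')=\lambda(xy)$, $\lambda'(yy')=\varepsilon$, and all other edges keeping their lengths; $U_1'$ is the set of vertices of $U_1$ in the component of $T-y$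 containing $x$, together with $y'$; $I'=(T',((U_1',S_1),(U_2,S_2),\dots,(U_k,S_k)))$. *)

theory Defs
  imports Complex_Main
begin

definition walk :: "'v set \<Rightarrow> 'v set set \<Rightarrow> 'v list \<Rightarrow> bool" where
  "walk V E p \<longleftrightarrow> p \<noteq> [] \<and> set p \<subseteq> V \<and>
     (\<forall>(a, b) \<in> set (zip p (tl p)). {a, b} \<in> E)"

definition walk_length :: "('v set \<Rightarrow> real) \<Rightarrow> 'v list \<Rightarrow> real" where
  "walk_length l p = sum_list (map (\<lambda>(a, b). l {a, b}) (zip p (tl p)))"

definition is_tree :: "'v set \<Rightarrow> 'v set set \<Rightarrow> bool" where
  "is_tree V E \<longleftrightarrow> finite V \<and> V \<noteq> {} \<and>
     (\<forall>e \<in> E. \<exists>a b. a \<noteq> b \<and> e = {a, b} \<and> a \<in> V \<and> b \<in> V) \<and>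
     (\<forall>u \<in> V. \<forall>v \<in> V. \<exists>p. walk V E p \<and> hd p = u \<and> last p = v) \<and>
     \<not> (\<exists>p. walk V E p \<and> length p \<ge> 3 \<and> distinct p \<and> {last p, hd p} \<in> E)"

definition tdist :: "'v set \<Rightarrow> 'v set set \<Rightarrow> ('v set \<Rightarrow> real) \<Rightarrow> 'v \<Rightarrow> 'v \<Rightarrow> real" where
  "tdist V E l u v = Inf {walk_length l p | p. walk V E p \<and> hd p = u \<and> last p = v}"

definition cell :: "'v set \<Rightarrow> 'v set set \<Rightarrow> ('v set \<Rightarrow> real) \<Rightarrow> 'v \<Rightarrow> 'v set \<Rightarrow> 'v set" where
  "cell V E l s \<Sigma> = {x \<in> V. \<forall>s' \<in> \<Sigma>. tdist V E l s x \<le> tdist V E l s' x}"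

definition gen_instance ::
  "'v set \<Rightarrow> 'v set set \<Rightarrow> ('v set \<Rightarrow> real) \<Rightarrow> nat \<Rightarrow> (nat \<Rightarrow> 'v set) \<Rightarrow> (nat \<Rightarrow> 'v set) \<Rightarrow> bool" where
  "gen_instance V E l k U S \<longleftrightarrow> is_tree V E \<and> (\<forall>e \<in> E. l e > 0) \<and>
     (\<forall>i \<in> {1..k}. U i \<subseteq> V \<and> S i \<subseteq> V) \<and> (\<Union>i \<in> {1..k}. U i) = V"

definition is_solution ::
  "'v set \<Rightarrow> 'v set set \<Rightarrow> ('v set \<Rightarrow> real) \<Rightarrow> nat \<Rightarrow> (nat \<Rightarrow> 'v set) \<Rightarrow> (nat \<Rightarrow> 'v set) \<Rightarrow> (nat \<Rightarrow> 'v) \<Rightarrow> bool" where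
  "is_solution V E l k U S s \<longleftrightarrow>
     (\<forall>i \<in> {1..k}. s i \<in> S i \<and> U i = cell V E l (s i) (s ` {1..k}))"

definition Wset :: "nat \<Rightarrow> (nat \<Rightarrow> 'v set) \<Rightarrow> nat \<Rightarrow> 'v set" where
  "Wset k U i = U i - (\<Union>j \<in> {1..k} - {i}. U j)"

definition Eset :: "'v set set \<Rightarrow> nat \<Rightarrow> (nat \<Rightarrow> 'v set) \<Rightarrow> nat \<Rightarrow> 'v set set" where
  "Eset E k U i = {{u, v} | u v. {u, v} \<in> E \<and> u \<in> Wset k U i \<and> v \<in> U i - Wset k U i}"

text \<open>Expansion of edge xy by eps, with fresh subdivision vertex y'.\<close>
definition exp_V :: "'v set \<Rightarrow> 'v \<Rightarrow> 'v set" where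
  "exp_V V y' = insert y' V"

definition exp_E :: "'v set set \<Rightarrow> 'v \<Rightarrow> 'v \<Rightarrow> 'v \<Rightarrow> 'v set set" where
  "exp_E E x y y' = (E - {{x, y}}) \<union> {{x, y'}, {y, y'}}"

definition exp_len :: "('v set \<Rightarrow> real) \<Rightarrow> 'v \<Rightarrow> 'v \<Rightarrow> 'v \<Rightarrow> real \<Rightarrow> 'v set \<Rightarrow> real" where
  "exp_len l x y y' eps = (\<lambda>e. if e = {x, y'} then l {x, y} else if e = {y, y'} then eps else l e)"

definition comp_without :: "'v set \<Rightarrow> 'v set set \<Rightarrow> 'v \<Rightarrow> 'v \<Rightarrow> 'v set" where
  "comp_without V E y x = {z. \<exists>p. walk (V - {y}) E p \<and> hd p = x \<and> last p = z}"

definition exp_U1 :: "'v set \<Rightarrow> 'v set set \<Rightarrow> (nat \<Rightarrow> 'v set) \<Rightarrow> 'v \<Rightarrow> 'v \<Rightarrow> 'v \<Rightarrow> 'v set" where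
  "exp_U1 V E U x y y' = insert y' (U 1 \<inter> comp_without V E y x)"

end

theory Submission
  imports Defs
begin


lemma walk_Nil[simp]: "\<not> walk V E []" by (simp add: walk_def)
lemma walk_single[simp]: "walk V E [a] \<longleftrightarrow> a \<in> V" by (simp add: walk_def)
lemma walk_Cons2[simp]: "walk V E (a#b#p) \<longleftrightarrow> a \<in> V \<and> {a,b} \<in> E \<and> walk V E (b#p)"
  by (auto simp add: walk_def)
lemma wl_single[simp]: "walk_length l [a] = 0" by (simp add: walk_length_def)
lemma wl_Cons2[simp]: "walk_length l (a#b#p) = l {a,b} + walk_length l (b#p)"
  by (simp add: walk_length_def)

lemma walk_append: "p \<noteq> [] \<Longrightarrow> q \<noteq> [] \<Longrightarrow>
   walk V E (p @ q) \<longleftrightarrow> walk V E p \<and> walk V E q \<and> {last p, hd q} \<in> E"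
proof (induction p rule: induct_list012)
  case (2 a) then show ?case by (cases q) auto
next
  case (3 a b p) then show ?case by auto
qed simp

lemma wl_append: "p \<noteq> [] \<Longrightarrow> q \<noteq> [] \<Longrightarrow>
   walk_length l (p @ q) = walk_length l p + l {last p, hd q} + walk_length l q"
proof (induction p rule: induct_list012)
  case (2 a) then show ?case by (cases q) auto
next
  case (3 a b p) then show ?case by auto
qed simp

lemma walk_rev: "walk V E p \<Longrightarrow> walk V E (rev p)"
proof (induction p rule: induct_list012)
  case (3 a b p)
  have "walk V E (rev (b#p) @ [a])"
    using 3 by (subst walk_append) (auto simp: last_rev insert_commute)
  then show ?case by simp
qed auto

lemma walk_concat: assumes a: "walk V E p" "walk V E q" "last p = hd q"
  shows "walk V E (p @ tl q) \<and> walk_length l (p @ tl q) = walk_length l p + walk_length l q"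
proof (cases "tl q")
  case Nil
  then show ?thesis using a by (cases q) auto
next
  case (Cons b r)
  obtain c where q: "q = c # b # r" using Cons by (cases q) auto
  have "p \<noteq> []" using a by auto
  then show ?thesis using q a walk_append[of p "b#r" V E] wl_append[of p "b#r" l]
    by auto
qed

lemma walk_mono: "walk W E p \<Longrightarrow> W \<subseteq> V \<Longrightarrow> walk V E p"
  by (auto simp: walk_def)

lemma wl_nonneg: "\<forall>e\<in>E. 0 \<le> l e \<Longrightarrow> walk V E p \<Longrightarrow> 0 \<le> walk_length l p"
  by (induction p rule: induct_list012) auto

lemma wl_pot: "(\<And>a b. a \<in> V \<Longrightarrow> b \<in> V \<Longrightarrow> {a,b} \<in> E \<Longrightarrow> f b - f a \<le> l {a,b}) \<Longrightarrow>
   walk V E p \<Longrightarrow> f (last p) - f (hd p) \<le> walk_length l p"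
proof (induction p rule: induct_list012)
  case (3 a b p)
  then have "f (last (b#p)) - f b \<le> walk_length l (b#p)" by auto
  moreover have "f b - f a \<le> l {a,b}" using 3 by (cases p) auto
  ultimately show ?case by simp
qed auto

lemma walk_distinct: "walk V E p \<Longrightarrow> \<exists>q. walk V E q \<and> distinct q \<and> hd q = hd p \<and> last q = last p \<and> set q \<subseteq> set p"
proof (induction "length p" arbitrary: p rule: less_induct)
  case less
  show ?case
  proof (cases "distinct p")
    case True then show ?thesis using less by blast
  next
    case False
    then obtain xs ys zs u where p: "p = xs @ [u] @ ys @ [u] @ zs"
      using not_distinct_decomp by blast
    let ?p = "xs @ [u] @ zs"
    have w: "walk V E ?p"
    proof -
      have w1: "walk V E ((xs @ [u] @ ys) @ ([u] @ zs))" using less(2) p by simp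
      have a: "walk V E (xs @ [u] @ ys)" "walk V E ([u] @ zs)"
        using walk_append[of "xs @ [u] @ ys" "[u] @ zs" V E] w1 by auto
      have b: "walk V E (xs @ [u])"
        using a(1) walk_append[of "xs @ [u]" ys V E] by (cases "ys = []") auto
      show ?thesis
      proof (cases "xs = []")
        case True then show ?thesis using a by simp
      next
        case False
        have "{last xs, u} \<in> E" using b walk_append[of xs "[u]" V E] False by auto
        moreover have "walk V E xs" using b walk_append[of xs "[u]" V E] False by auto
        ultimately show ?thesis using a walk_append[of xs "[u] @ zs" V E] False by auto
      qed
    qed
    have "length ?p < length p" using p by simp
    then obtain q where q: "walk V E q \<and> distinct q \<and> hd q = hd ?p \<and> last q = last ?p \<and> set q \<subseteq> set ?p"
      using less(1) w by blast
    have "hd ?p = hd p" using p by (cases xs) auto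
    moreover have "last ?p = last p" using p by (cases zs) auto
    moreover have "set ?p \<subseteq> set p" using p by auto
    ultimately show ?thesis using q by auto
  qed
qed

definition reach where "reach V E u v \<longleftrightarrow> (\<exists>p. walk V E p \<and> hd p = u \<and> last p = v)"

lemma reach_refl: "u \<in> V \<Longrightarrow> reach V E u u"
  unfolding reach_def by (rule exI[of _ "[u]"]) simp
lemma reach_edge: "u \<in> V \<Longrightarrow> v \<in> V \<Longrightarrow> {u,v} \<in> E \<Longrightarrow> reach V E u v"
  unfolding reach_def by (rule exI[of _ "[u,v]"]) simp
lemma reach_sym: "reach V E u v \<Longrightarrow> reach V E v u"
  unfolding reach_def using walk_rev by (metis hd_rev last_rev)
lemma reach_trans: "reach V E u v \<Longrightarrow> reach V E v w \<Longrightarrow> reach V E u w"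
  unfolding reach_def
proof (elim exE conjE)
  fix p q assume "walk V E p" "hd p = u" "last p = v" "walk V E q" "hd q = v" "last q = w"
  then show "\<exists>r. walk V E r \<and> hd r = u \<and> last r = w"
    using walk_concat[of V E p q]
    by (intro exI[of _ "p @ tl q"]) (cases q; cases p; auto)
qed
lemma reach_mono: "reach W E u v \<Longrightarrow> W \<subseteq> V \<Longrightarrow> reach V E u v"
  unfolding reach_def using walk_mono by blast

lemma walk_in: "walk V E p \<Longrightarrow> hd p \<in> V \<and> last p \<in> V"
  unfolding walk_def by auto
lemma reach_in: "reach V E u v \<Longrightarrow> u \<in> V \<and> v \<in> V"
  unfolding reach_def using walk_in by blast

lemma td_le: "\<forall>e\<in>E. 0 \<le> l e \<Longrightarrow> walk V E p \<Longrightarrow> hd p = u \<Longrightarrow> last p = v \<Longrightarrow>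
   tdist V E l u v \<le> walk_length l p"
  unfolding tdist_def
  by (rule cInf_lower) (use wl_nonneg[of E l V] in \<open>auto intro!: bdd_belowI[of _ 0]\<close>)

lemma td_ge: "reach V E u v \<Longrightarrow> (\<And>p. walk V E p \<Longrightarrow> hd p = u \<Longrightarrow> last p = v \<Longrightarrow> c \<le> walk_length l p)
   \<Longrightarrow> c \<le> tdist V E l u v"
  unfolding tdist_def reach_def by (rule cInf_greatest) auto

lemma td_nonneg: "\<forall>e\<in>E. 0 \<le> l e \<Longrightarrow> reach V E u v \<Longrightarrow> 0 \<le> tdist V E l u v"
  by (rule td_ge) (use wl_nonneg[of E l V] in auto)

lemma td_refl: "\<forall>e\<in>E. 0 \<le> l e \<Longrightarrow> u \<in> V \<Longrightarrow> tdist V E l u u = 0"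
  proof -
  assume a: "\<forall>e\<in>E. 0 \<le> l e" "u \<in> V"
  have "tdist V E l u u \<le> 0" using td_le[OF a(1), of V "[u]" u u] a by simp
  moreover have "0 \<le> tdist V E l u u" using td_nonneg[OF a(1)] reach_refl[OF a(2)] by blast
  ultimately show ?thesis by simp
qed

lemma td_edge: "\<forall>e\<in>E. 0 \<le> l e \<Longrightarrow> u \<in> V \<Longrightarrow> v \<in> V \<Longrightarrow> {u,v} \<in> E \<Longrightarrow> tdist V E l u v \<le> l {u,v}"
  using td_le[of E l V "[u,v]" u v] by simp

lemma td_tri: assumes nn: "\<forall>e\<in>E. 0 \<le> l e" and r1: "reach V E u v" and r2: "reach V E v w"
  shows "tdist V E l u w \<le> tdist V E l u v + tdist V E l v w"
proof -
  have "tdist V E l u w - walk_length l q \<le> tdist V E l u v"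
    if q: "walk V E q" "hd q = v" "last q = w" for q
  proof (rule td_ge[OF r1])
    fix p assume p: "walk V E p" "hd p = u" "last p = v"
    have "walk V E (p @ tl q) \<and> walk_length l (p @ tl q) = walk_length l p + walk_length l q"
      using walk_concat[OF p(1) q(1), of l] p q by simp
    moreover have "hd (p @ tl q) = u" using p by (cases p) auto
    moreover have "last (p @ tl q) = w" using p q by (cases "tl q"; cases q) auto
    ultimately have "tdist V E l u w \<le> walk_length l p + walk_length l q"
      using td_le[OF nn, of V "p @ tl q" u w] by simp
    then show "tdist V E l u w - walk_length l q \<le> walk_length l p" by simp
  qed
  then have "tdist V E l u w - tdist V E l u v \<le> tdist V E l v w"
    by (intro td_ge[OF r2]) force
  then show ?thesis by simp
qed

lemma td_pot: "reach V E u v \<Longrightarrow> (\<And>a b. a \<in> V \<Longrightarrow> b \<in> V \<Longrightarrow> {a,b} \<in> E \<Longrightarrow> f b - f a \<le> l {a,b}) \<Longrightarrow>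
   f v - f u \<le> tdist V E l u v"
proof (rule td_ge)
  fix p assume "walk V E p" "hd p = u" "last p = v"
    "(\<And>a b. a \<in> V \<Longrightarrow> b \<in> V \<Longrightarrow> {a,b} \<in> E \<Longrightarrow> f b - f a \<le> l {a,b})"
  then show "f v - f u \<le> walk_length l p" using wl_pot[of V E f l p] by blast
qed

lemma td_mono: assumes "reach W F u v" and "\<forall>e\<in>E. 0 \<le> l e"
  and "\<And>p. walk W F p \<Longrightarrow> walk V E p \<and> walk_length l p \<le> walk_length m p"
  shows "tdist V E l u v \<le> tdist W F m u v"
proof (rule td_ge[OF assms(1)])
  fix p assume p: "walk W F p" "hd p = u" "last p = v"
  then have "walk V E p" "walk_length l p \<le> walk_length m p" using assms(3) by auto
  then show "tdist V E l u v \<le> walk_length m p" using td_le[OF assms(2)] p by fastforce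
qed



locale xp =
  fixes V :: "'v set" and E :: "'v set set" and l :: "'v set \<Rightarrow> real" and x y y' :: 'v and eps :: real and A :: "'v set"
  assumes tree: "is_tree V E" and lpos: "\<forall>e\<in>E. 0 < l e" and xyE: "{x,y} \<in> E"
    and xny: "x \<noteq> y" and fresh: "y' \<notin> V" and eps: "eps > 0"
    and A_def: "A = comp_without V E y x"
begin

abbreviation "D \<equiv> tdist V E l"
abbreviation "DA \<equiv> tdist A E l"
abbreviation "DB \<equiv> tdist (V - A) E l"
abbreviation "lam \<equiv> l {x,y}"

lemma nn: "\<forall>e\<in>E. 0 \<le> l e" using lpos by (simp add: less_imp_le)

lemma edge_in: assumes "{a,b} \<in> E" shows "a \<in> V \<and> b \<in> V \<and> a \<noteq> b"
proof -
  obtain c d where "c \<noteq> d" "{a,b} = {c,d}" "c \<in> V" "d \<in> V"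
    using tree assms unfolding is_tree_def by blast
  then show ?thesis by (metis doubleton_eq_iff insertI1 insert_absorb2)
qed

lemma xV: "x \<in> V" and yV: "y \<in> V" using edge_in[OF xyE] by auto

lemma lam_pos: "lam > 0" using lpos xyE by auto

lemma conn: "u \<in> V \<Longrightarrow> v \<in> V \<Longrightarrow> reach V E u v"
  using tree unfolding is_tree_def reach_def by blast

lemma A_sub: "A \<subseteq> V - {y}"
  unfolding A_def comp_without_def using walk_in by blast

lemma xA: "x \<in> A"
  unfolding A_def comp_without_def using xV xny by (intro CollectI exI[of _ "[x]"]) auto

lemma yA: "y \<notin> A" using A_sub by auto
lemma AV: "A \<subseteq> V" using A_sub by auto

lemma A_closed: assumes "a \<in> A" "b \<in> V" "b \<noteq> y" "{a,b} \<in> E" shows "b \<in> A"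
proof -
  obtain p where p: "walk (V - {y}) E p" "hd p = x" "last p = a"
    using assms(1) unfolding A_def comp_without_def by blast
  have "p \<noteq> []" using p by auto
  then have "walk (V - {y}) E (p @ [b])" using walk_append[of p "[b]" "V - {y}" E] p assms by auto
  moreover have "hd (p @ [b]) = x" using p \<open>p \<noteq> []\<close> by simp
  ultimately show ?thesis unfolding A_def comp_without_def by force
qed

lemma A_walk: "walk (V - {y}) E p \<Longrightarrow> hd p = x \<Longrightarrow> set p \<subseteq> A"
proof (induction p rule: rev_induct)
  case (snoc z q)
  have "z \<in> A" using snoc.prems unfolding A_def comp_without_def by force
  moreover have "set q \<subseteq> A"
  proof (cases "q = []")
    case False
    then have "walk (V - {y}) E q" using walk_append[of q "[z]" "V - {y}" E] snoc.prems by auto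
    then show ?thesis using snoc False by simp
  qed simp
  ultimately show ?case by simp
qed simp

lemma reach_xA: "v \<in> A \<Longrightarrow> reach A E x v"
proof -
  assume "v \<in> A"
  then obtain p where p: "walk (V - {y}) E p" "hd p = x" "last p = v"
    unfolding A_def comp_without_def by blast
  then have "set p \<subseteq> A" using A_walk by blast
  then have "walk A E p" using p(1) unfolding walk_def by auto
  then show ?thesis using p unfolding reach_def by blast
qed

lemma reachA: "u \<in> A \<Longrightarrow> v \<in> A \<Longrightarrow> reach A E u v"
  using reach_xA reach_sym reach_trans by metis

lemma yB: "y \<in> V - A" using yV yA by simp

lemma reach_By: "v \<in> V - A \<Longrightarrow> reach (V - A) E v y"
proof -
  assume v: "v \<in> V - A"
  obtain p where p: "walk V E p" "hd p = v" "last p = y" using conn[OF _ yV] v unfolding reach_def by blast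
  have "\<And>v. walk V E p \<Longrightarrow> hd p = v \<Longrightarrow> last p = y \<Longrightarrow> v \<in> V - A \<Longrightarrow> reach (V - A) E v y"
  proof (induction p rule: induct_list012)
    case (2 a) then show ?case using reach_refl[of y "V - A" E] yB by auto
  next
    case (3 a b p)
    show ?case
    proof (cases "a = y")
      case True then show ?thesis using 3 reach_refl[of y "V - A" E] yB by auto
    next
      case False
      have ab: "{a,b} \<in> E" "b \<in> V" using 3 by (auto dest: edge_in)
      have "b \<notin> A"
      proof
        assume "b \<in> A"
        moreover have "{b,a} \<in> E" using ab by (simp add: insert_commute)
        ultimately have "a \<in> A" using A_closed[of b a] 3 False by auto
        then show False using 3 by auto
      qed
      then have "reach (V - A) E b y" using 3 ab by auto
      moreover have "reach (V - A) E a b" using 3 ab \<open>b \<notin> A\<close> by (intro reach_edge) auto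
      ultimately show ?thesis using 3 reach_trans by auto
    qed
  qed simp
  then show ?thesis using p v by blast
qed

lemma reachB: "u \<in> V - A \<Longrightarrow> v \<in> V - A \<Longrightarrow> reach (V - A) E u v"
  using reach_By reach_sym reach_trans by metis

lemma cross: assumes e: "{a,b} \<in> E" and a: "a \<in> A" and b: "b \<notin> A" shows "a = x \<and> b = y"
proof -
  have bV: "b \<in> V" using edge_in[OF e] by simp
  have bY: "b = y" using A_closed[OF a bV _ e] b by blast
  show ?thesis
  proof (rule ccontr)
    assume "\<not> (a = x \<and> b = y)"
    then have ax: "a \<noteq> x" using bY by simp
    obtain p where p: "walk (V - {y}) E p" "hd p = x" "last p = a"
      using a unfolding A_def comp_without_def by blast
    obtain q where q: "walk (V - {y}) E q" "distinct q" "hd q = x" "last q = a"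
      using walk_distinct[OF p(1)] p by metis
    have yq: "y \<notin> set q" using q(1) unfolding walk_def by auto
    have qne: "q \<noteq> []" using q by auto
    have "length q \<noteq> 1"
    proof
      assume "length q = 1"
      then obtain c where "q = [c]" by (metis One_nat_def length_0_conv length_Suc_conv)
      then show False using q ax by simp
    qed
    then have lq: "length q \<ge> 2" using qne by (cases q) (auto simp: Suc_le_eq)
    have wq: "walk V E q" using walk_mono[OF q(1)] by blast
    have "walk V E (q @ [y])" using walk_append[of q "[y]" V E] wq qne q e bY yV by auto
    moreover have "length (q @ [y]) \<ge> 3" using lq by simp
    moreover have "distinct (q @ [y])" using q yq by simp
    moreover have "{last (q @ [y]), hd (q @ [y])} \<in> E" using q qne xyE by (simp add: insert_commute)
    ultimately show False using tree unfolding is_tree_def by blast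
  qed
qed

lemma side: assumes "{a,b} \<in> E" "{a,b} \<noteq> {x,y}" shows "a \<in> A \<longleftrightarrow> b \<in> A"
proof -
  have "{b,a} \<in> E" using assms by (simp add: insert_commute)
  then show ?thesis using cross[OF assms(1)] cross[of b a] assms(2) by (auto simp: insert_commute)
qed

lemma DA_lip: "s \<in> A \<Longrightarrow> a \<in> A \<Longrightarrow> b \<in> A \<Longrightarrow> {a,b} \<in> E \<Longrightarrow> DA s b \<le> DA s a + l {a,b}"
  using td_tri[OF nn reachA[of s a] reach_edge[of a A b E]] td_edge[OF nn, of a A b] by force

lemma DB_lip: "s \<in> V - A \<Longrightarrow> a \<in> V - A \<Longrightarrow> b \<in> V - A \<Longrightarrow> {a,b} \<in> E \<Longrightarrow> DB s b \<le> DB s a + l {a,b}"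
  using td_tri[OF nn reachB[of s a] reach_edge[of a "V - A" b E]] td_edge[OF nn, of a "V - A" b] by force

lemma D_lip: "s \<in> V \<Longrightarrow> a \<in> V \<Longrightarrow> b \<in> V \<Longrightarrow> {a,b} \<in> E \<Longrightarrow> D s b \<le> D s a + l {a,b}"
  using td_tri[OF nn conn[of s a] reach_edge[of a V b E]] td_edge[OF nn, of a V b] by force

lemma D_tri: "a \<in> V \<Longrightarrow> b \<in> V \<Longrightarrow> c \<in> V \<Longrightarrow> D a c \<le> D a b + D b c"
  using td_tri[OF nn conn[of a b] conn[of b c]] by blast

lemma D_DA: "s \<in> A \<Longrightarrow> v \<in> A \<Longrightarrow> D s v \<le> DA s v"
  by (rule td_mono[OF reachA nn]) (use walk_mono AV in auto)

lemma D_DB: "s \<in> V - A \<Longrightarrow> v \<in> V - A \<Longrightarrow> D s v \<le> DB s v"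
  by (rule td_mono[OF reachB nn]) (use walk_mono in auto)

lemma D_xy: "D x y \<le> lam" using td_edge[OF nn xV yV xyE] .
lemma D_yx: "D y x \<le> lam" using td_edge[OF nn yV xV] xyE by (simp add: insert_commute)

lemma hA: assumes s: "s \<in> A" and v: "v \<in> V"
  shows "D s v = (if v \<in> A then DA s v else DA s x + lam + DB y v)"
proof -
  define f where "f = (\<lambda>v. if v \<in> A then DA s v else DA s x + lam + DB y v)"
  have f0: "f s = 0" using s td_refl[OF nn, of s A] by (simp add: f_def)
  have "f v - f s \<le> D s v"
  proof (rule td_pot[OF conn])
    show "s \<in> V" using s AV by auto
    show "v \<in> V" by fact
    fix a b assume ab: "a \<in> V" "b \<in> V" "{a,b} \<in> E"
    have ba: "{b,a} \<in> E" using ab by (simp add: insert_commute)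
    show "f b - f a \<le> l {a,b}"
    proof (cases "a \<in> A")
      case True
      show ?thesis
      proof (cases "b \<in> A")
        case True then show ?thesis using \<open>a \<in> A\<close> DA_lip[OF s _ _ ab(3)] by (simp add: f_def)
      next
        case False
        then have "a = x" "b = y" using cross[OF ab(3) True] by auto
        then show ?thesis using True False td_refl[OF nn yB] by (simp add: f_def)
      qed
    next
      case False
      show ?thesis
      proof (cases "b \<in> A")
        case True
        then have "b = x" "a = y" using cross[OF ba True False] by auto
        then show ?thesis using True False td_refl[OF nn yB] lam_pos by (simp add: f_def insert_commute)
      next
        case False
        then show ?thesis using \<open>a \<notin> A\<close> DB_lip[OF yB, of a b] ab by (simp add: f_def)
      qed
    qed
  qed
  then have ge: "f v \<le> D s v" using f0 by simp
  have le: "D s v \<le> f v"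
  proof (cases "v \<in> A")
    case True then show ?thesis using D_DA[OF s] by (simp add: f_def)
  next
    case False
    have sV: "s \<in> V" using s AV by auto
    have "D s v \<le> D s x + D x y + D y v" using D_tri[OF sV xV v] D_tri[OF xV yV v] by simp
    also have "\<dots> \<le> DA s x + lam + DB y v"
      using D_DA[OF s xA] D_xy D_DB[OF yB, of v] v False by simp
    finally show ?thesis using False by (simp add: f_def)
  qed
  show ?thesis using ge le by (simp add: f_def)
qed

lemma hB: assumes s: "s \<in> V - A" and v: "v \<in> V"
  shows "D s v = (if v \<notin> A then DB s v else DB s y + lam + DA x v)"
proof -
  define f where "f = (\<lambda>v. if v \<notin> A then DB s v else DB s y + lam + DA x v)"
  have f0: "f s = 0" using s td_refl[OF nn, of s "V - A"] by (simp add: f_def)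
  have "f v - f s \<le> D s v"
  proof (rule td_pot[OF conn])
    show "s \<in> V" using s by auto
    show "v \<in> V" by fact
    fix a b assume ab: "a \<in> V" "b \<in> V" "{a,b} \<in> E"
    have ba: "{b,a} \<in> E" using ab by (simp add: insert_commute)
    show "f b - f a \<le> l {a,b}"
    proof (cases "a \<in> A")
      case True
      show ?thesis
      proof (cases "b \<in> A")
        case True then show ?thesis using \<open>a \<in> A\<close> DA_lip[OF xA _ _ ab(3)] by (simp add: f_def)
      next
        case False
        then have "a = x" "b = y" using cross[OF ab(3) True] by auto
        then show ?thesis using True False td_refl[OF nn xA] lam_pos by (simp add: f_def)
      qed
    next
      case False
      show ?thesis
      proof (cases "b \<in> A")
        case True
        then have "b = x" "a = y" using cross[OF ba True False] by auto
        then show ?thesis using True False td_refl[OF nn xA] by (simp add: f_def insert_commute)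
      next
        case False
        then show ?thesis using \<open>a \<notin> A\<close> DB_lip[OF s, of a b] ab by (simp add: f_def)
      qed
    qed
  qed
  then have ge: "f v \<le> D s v" using f0 by simp
  have le: "D s v \<le> f v"
  proof (cases "v \<in> A")
    case False then show ?thesis using D_DB[OF s] v by (simp add: f_def)
  next
    case True
    have sV: "s \<in> V" using s by auto
    have "D s v \<le> D s y + D y x + D x v" using D_tri[OF sV yV v] D_tri[OF yV xV v] by simp
    also have "\<dots> \<le> DB s y + lam + DA x v"
      using D_DB[OF s yB] D_yx D_DA[OF xA True] by simp
    finally show ?thesis using True by (simp add: f_def)
  qed
  show ?thesis using ge le by (simp add: f_def)
qed


abbreviation "V2 \<equiv> exp_V V y'"
abbreviation "E2 \<equiv> exp_E E x y y'"
abbreviation "l2 \<equiv> exp_len l x y y' eps"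
abbreviation "D2 \<equiv> tdist V2 E2 l2"

lemma xny': "x \<noteq> y'" and yny': "y \<noteq> y'" using xV yV fresh by auto

lemma V2: "V2 = insert y' V" by (simp add: exp_V_def)

lemma E2_cases: "e \<in> E2 \<Longrightarrow> (e \<in> E \<and> e \<noteq> {x,y}) \<or> e = {x,y'} \<or> e = {y,y'}"
  by (auto simp: exp_E_def)

lemma E2_E: "e \<in> E \<Longrightarrow> e \<noteq> {x,y} \<Longrightarrow> e \<in> E2" by (auto simp: exp_E_def)
lemma E2_xy': "{x,y'} \<in> E2" and E2_yy': "{y,y'} \<in> E2" by (auto simp: exp_E_def)

lemma l2_E: assumes "e \<in> E" shows "l2 e = l e"
proof -
  obtain c d where "e = {c,d}" "c \<in> V" "d \<in> V" using tree assms unfolding is_tree_def by blast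
  then have "y' \<notin> e" using fresh by auto
  then show ?thesis by (auto simp: exp_len_def)
qed

lemma l2_xy': "l2 {x,y'} = lam" by (simp add: exp_len_def)
lemma l2_yy': "l2 {y,y'} = eps"
  using xny yny' xny' by (auto simp: exp_len_def doubleton_eq_iff)

lemma nn2: "\<forall>e\<in>E2. 0 \<le> l2 e"
proof
  fix e assume "e \<in> E2"
  then show "0 \<le> l2 e" using E2_cases[of e] l2_E nn l2_xy' l2_yy' eps lam_pos by force
qed

lemma embed: assumes W: "W \<subseteq> V" and xyW: "x \<notin> W \<or> y \<notin> W"
  shows "walk W E p \<Longrightarrow> walk V2 E2 p \<and> walk_length l2 p = walk_length l p"
proof (induction p rule: induct_list012)
  case (2 a) then show ?case using W by (auto simp: V2)
next
  case (3 a b p)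
  have e: "{a,b} \<in> E" "a \<in> W" "b \<in> W" using 3(3) by (auto simp: walk_def)
  have "{a,b} \<noteq> {x,y}" using e xyW by (auto simp: doubleton_eq_iff)
  then have "{a,b} \<in> E2" using E2_E e by blast
  moreover have "a \<in> V2" using e W by (auto simp: V2)
  ultimately show ?case using 3 l2_E[OF e(1)] by auto
qed simp

lemma reachA2: "u \<in> A \<Longrightarrow> v \<in> A \<Longrightarrow> reach V2 E2 u v"
  using reachA[of u v] embed[OF AV] yA unfolding reach_def by blast
lemma reachB2: "u \<in> V - A \<Longrightarrow> v \<in> V - A \<Longrightarrow> reach V2 E2 u v"
  using reachB[of u v] embed[of "V - A"] xA unfolding reach_def by blast

lemma D2_DA: "s \<in> A \<Longrightarrow> v \<in> A \<Longrightarrow> D2 s v \<le> DA s v"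
  by (rule td_mono[OF reachA nn2]) (use embed[OF AV] yA in auto)
lemma D2_DB: "s \<in> V - A \<Longrightarrow> v \<in> V - A \<Longrightarrow> D2 s v \<le> DB s v"
  by (rule td_mono[OF reachB nn2]) (use embed[of "V - A"] xA in auto)

lemma y'V2: "y' \<in> V2" and VV2: "V \<subseteq> V2" by (auto simp: V2)

lemma reach2_x: "u \<in> V2 \<Longrightarrow> reach V2 E2 x u"
proof -
  assume u: "u \<in> V2"
  have xy': "reach V2 E2 x y'" using reach_edge[OF _ y'V2 E2_xy'] xV VV2 by auto
  have y'y: "reach V2 E2 y' y" using reach_edge[OF y'V2 _, of y E2] yV VV2 E2_yy'
    by (auto simp: insert_commute)
  show ?thesis
  proof (cases "u = y'")
    case True then show ?thesis using xy' by simp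
  next
    case False
    then have "u \<in> V" using u by (simp add: V2)
    then show ?thesis
    proof (cases "u \<in> A")
      case True then show ?thesis using reachA2 xA by blast
    next
      case False
      then have "reach V2 E2 y u" using reachB2 yB \<open>u \<in> V\<close> by blast
      then show ?thesis using xy' y'y reach_trans by metis
    qed
  qed
qed

lemma reach2: "u \<in> V2 \<Longrightarrow> v \<in> V2 \<Longrightarrow> reach V2 E2 u v"
  using reach2_x reach_sym reach_trans by metis

lemma D2_tri: "a \<in> V2 \<Longrightarrow> b \<in> V2 \<Longrightarrow> c \<in> V2 \<Longrightarrow> D2 a c \<le> D2 a b + D2 b c"
  using td_tri[OF nn2 reach2[of a b] reach2[of b c]] by blast

lemma D2_xy': "D2 x y' \<le> lam" using td_edge[OF nn2 _ y'V2 E2_xy'] xV VV2 l2_xy' by auto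
lemma D2_y'x: "D2 y' x \<le> lam" using td_edge[OF nn2 y'V2 _, of x] E2_xy' xV VV2 l2_xy'
  by (auto simp: insert_commute)
lemma D2_yy': "D2 y y' \<le> eps" using td_edge[OF nn2 _ y'V2 E2_yy'] yV VV2 l2_yy' by auto
lemma D2_y'y: "D2 y' y \<le> eps" using td_edge[OF nn2 y'V2 _, of y] E2_yy' yV VV2 l2_yy'
  by (auto simp: insert_commute)

definition "g s v = D s (if v = y' then y else v) + (if (s \<in> A) = (v \<in> insert y' A) then 0 else eps)"

lemma DA_eq: "s \<in> A \<Longrightarrow> v \<in> A \<Longrightarrow> D s v = DA s v" using hA[of s v] AV by auto
lemma DB_eq: "s \<in> V - A \<Longrightarrow> v \<in> V - A \<Longrightarrow> D s v = DB s v" using hB[of s v] by auto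
lemma F_ii: "s \<in> A \<Longrightarrow> D s y = D s x + lam"
  using hA[OF _ yV, of s] DA_eq[OF _ xA, of s] td_refl[OF nn yB] yA by simp
lemma F_i: "s \<in> A \<Longrightarrow> z \<in> V - A \<Longrightarrow> D s z = D s y + D y z"
  using hA[of s z] hA[OF _ yV, of s] DB_eq[OF yB, of z] td_refl[OF nn yB] yA by simp
lemma F_iii: "s \<in> V - A \<Longrightarrow> z \<in> A \<Longrightarrow> D s z = D s y + lam + D x z"
  using hB[of s z] DA_eq[OF xA, of z] DB_eq[OF _ yB, of s] AV by auto
lemma F_iii': "s \<in> V - A \<Longrightarrow> D s x = D s y + lam"
  using F_iii[OF _ xA, of s] td_refl[OF nn xV] by simp

lemma D2_ge: assumes s: "s \<in> V" and v: "v \<in> V2" shows "g s v \<le> D2 s v"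
proof -
  have sA': "(s \<in> A) = (s \<in> insert y' A)" using s fresh by auto
  have g0: "g s s = 0" using s fresh td_refl[OF nn s] sA' by (auto simp: g_def)
  have "g s v - g s s \<le> D2 s v"
  proof (rule td_pot[OF reach2])
    show "s \<in> V2" using s VV2 by auto
    show "v \<in> V2" by fact
    fix a b assume ab: "a \<in> V2" "b \<in> V2" "{a,b} \<in> E2"
    show "g s b - g s a \<le> l2 {a,b}"
    proof (cases "{a,b} \<in> E \<and> {a,b} \<noteq> {x,y}")
      case True
      then have abV: "a \<in> V" "b \<in> V" using edge_in by auto
      then have ab': "a \<noteq> y'" "b \<noteq> y'" using fresh by auto
      have "(a \<in> A) = (b \<in> A)" using side True by blast
      then have "g s b - g s a = D s b - D s a" using ab' by (simp add: g_def)
      also have "\<dots> \<le> l {a,b}" using D_lip[OF s abV] True by simp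
      finally show ?thesis using l2_E True by simp
    next
      case False
      then have cases: "{a,b} = {x,y'} \<or> {a,b} = {y,y'}" using E2_cases[OF ab(3)] by blast
      have gx: "g s x = D s x + (if s \<in> A then 0 else eps)" using xA xny' by (simp add: g_def)
      have gy: "g s y = D s y + (if s \<in> A then eps else 0)" using yA yny' by (simp add: g_def)
      have gy': "g s y' = D s y + (if s \<in> A then 0 else eps)" by (simp add: g_def)
      have l1: "D s y \<le> D s x + lam" using D_lip[OF s xV yV xyE] .
      have l2': "D s x \<le> D s y + lam" using D_lip[OF s yV xV] xyE by (simp add: insert_commute)
      have ii: "s \<in> A \<Longrightarrow> D s y = D s x + lam" using F_ii by blast
      show ?thesis
      proof (cases "{a,b} = {x,y'}")
        case True
        then have "(a = x \<and> b = y') \<or> (a = y' \<and> b = x)" by (auto simp: doubleton_eq_iff)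
        then show ?thesis using True gx gy' l1 l2' ii lam_pos l2_xy' by (cases "s \<in> A") auto
      next
        case False
        then have T: "{a,b} = {y,y'}" using cases by blast
        then have "(a = y \<and> b = y') \<or> (a = y' \<and> b = y)" by (auto simp: doubleton_eq_iff)
        then show ?thesis using T gy gy' eps l2_yy' by (cases "s \<in> A") auto
      qed
    qed
  qed
  then show ?thesis using g0 by simp
qed

lemma D2_le: assumes s: "s \<in> V" and v: "v \<in> V2" shows "D2 s v \<le> g s v"
proof -
  have sV2: "s \<in> V2" using s VV2 by auto
  have xV2: "x \<in> V2" and yV2: "y \<in> V2" using xV yV VV2 by auto
  show ?thesis
  proof (cases "s \<in> A")
    case sA: True
    show ?thesis
    proof (cases "v = y'")
      case True
      have "D2 s v \<le> D2 s x + D2 x y'" using D2_tri[OF sV2 xV2 y'V2] True by simp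
      also have "\<dots> \<le> DA s x + lam" using D2_DA[OF sA xA] D2_xy' by simp
      also have "\<dots> = D s y" using F_ii[OF sA] DA_eq[OF sA xA] by simp
      finally show ?thesis using True sA by (simp add: g_def)
    next
      case False
      then have vV: "v \<in> V" using v by (simp add: V2)
      show ?thesis
      proof (cases "v \<in> A")
        case True
        then show ?thesis using D2_DA[OF sA True] DA_eq[OF sA True] sA False by (simp add: g_def)
      next
        case vB: False
        have vV2: "v \<in> V2" by fact
        have "D2 s v \<le> D2 s y' + D2 y' v" using D2_tri[OF sV2 y'V2 vV2] .
        also have "\<dots> \<le> (D2 s x + D2 x y') + (D2 y' y + D2 y v)"
          using D2_tri[OF sV2 xV2 y'V2] D2_tri[OF y'V2 yV2 vV2] by simp
        also have "\<dots> \<le> DA s x + lam + eps + DB y v"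
          using D2_DA[OF sA xA] D2_xy' D2_y'y D2_DB[OF yB, of v] vV vB by simp
        also have "\<dots> = D s v + eps"
          using hA[OF sA vV] vB by simp
        finally show ?thesis using sA vB False by (simp add: g_def)
      qed
    qed
  next
    case sB': False
    then have sB: "s \<in> V - A" using s by simp
    show ?thesis
    proof (cases "v = y'")
      case True
      have "D2 s v \<le> D2 s y + D2 y y'" using D2_tri[OF sV2 yV2 y'V2] True by simp
      also have "\<dots> \<le> DB s y + eps" using D2_DB[OF sB yB] D2_yy' by simp
      also have "\<dots> = D s y + eps" using DB_eq[OF sB yB] by simp
      finally show ?thesis using True sB' by (simp add: g_def)
    next
      case False
      then have vV: "v \<in> V" using v by (simp add: V2)
      show ?thesis
      proof (cases "v \<in> A")
        case False
        then show ?thesis using D2_DB[OF sB] DB_eq[OF sB] vV sB' \<open>v \<noteq> y'\<close> by (simp add: g_def)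
      next
        case vA: True
        have vV2: "v \<in> V2" by fact
        have "D2 s v \<le> D2 s y' + D2 y' v" using D2_tri[OF sV2 y'V2 vV2] .
        also have "\<dots> \<le> (D2 s y + D2 y y') + (D2 y' x + D2 x v)"
          using D2_tri[OF sV2 yV2 y'V2] D2_tri[OF y'V2 xV2 vV2] by simp
        also have "\<dots> \<le> DB s y + eps + lam + DA x v"
          using D2_DB[OF sB yB] D2_yy' D2_y'x D2_DA[OF xA vA] by simp
        also have "\<dots> = D s v + eps"
          using hB[OF sB vV] vA by simp
        finally show ?thesis using sB' vA \<open>v \<noteq> y'\<close> by (simp add: g_def)
      qed
    qed
  qed
qed

lemma D2_eq: "s \<in> V \<Longrightarrow> v \<in> V2 \<Longrightarrow> D2 s v = g s v"
  using D2_le D2_ge by (simp add: order_antisym)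

end


lemma min_shift:
  fixes f d :: "'a \<Rightarrow> real"
  assumes m: "m \<in> S" "P m" "\<forall>s\<in>S. f m \<le> f s"
    and d: "\<And>s. d s = (if P s then 0 else e)" and e: "e > 0" and c: "c \<in> S"
  shows "(\<forall>s\<in>S. f c + d c \<le> f s + d s) \<longleftrightarrow> ((\<forall>s\<in>S. f c \<le> f s) \<and> P c)"
proof
  assume h: "\<forall>s\<in>S. f c + d c \<le> f s + d s"
  have "f c + d c \<le> f m" using h m d by force
  moreover have "f m \<le> f c" using m c by blast
  moreover have "d c \<ge> 0" using d e by (simp add: less_imp_le)
  ultimately have Pc: "P c" using d[of c] e by (auto split: if_splits)
  have "\<forall>s\<in>S. f c \<le> f s" using \<open>f c + d c \<le> f m\<close> m d Pc by force
  then show "(\<forall>s\<in>S. f c \<le> f s) \<and> P c" using Pc by blast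
next
  assume "(\<forall>s\<in>S. f c \<le> f s) \<and> P c"
  then show "\<forall>s\<in>S. f c + d c \<le> f s + d s" using d e by (auto intro: add_increasing2 less_imp_le)
qed

theorem lemma16:
  fixes V :: "'v set" and E :: "'v set set" and l :: "'v set \<Rightarrow> real"
    and k :: nat and U S :: "nat \<Rightarrow> 'v set" and s :: "nat \<Rightarrow> 'v"
    and x y y' :: 'v and eps :: real
  assumes inst: "gen_instance V E l k U S"
    and k1: "1 \<le> k"
    and SW: "\<forall>i \<in> {1..k}. S i \<subseteq> Wset k U i"
    and edge: "{x, y} \<in> Eset E k U 1"
    and xW: "x \<in> Wset k U 1"
    and yU: "y \<in> U 1 - Wset k U 1"
    and eps: "eps > 0"
    and fresh: "y' \<notin> V"
    and sol: "is_solution V E l k U S s"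
  shows "is_solution (exp_V V y') (exp_E E x y y') (exp_len l x y y' eps) k
           (U(1 := exp_U1 V E U x y y')) S s"
proof -
  define A where "A = comp_without V E y x"
  have xyE: "{x,y} \<in> E" using edge unfolding Eset_def by auto
  have xny: "x \<noteq> y" using xW yU by auto
  interpret xp V E l x y y' eps A
    using inst xyE xny fresh eps A_def unfolding gen_instance_def by unfold_locales auto
  define Sig where "Sig = s ` {1..k}"
  have k1': "1 \<in> {1..k}" using k1 by simp
  have sV: "\<And>i. i \<in> {1..k} \<Longrightarrow> s i \<in> V" using sol inst unfolding is_solution_def gen_instance_def by blast
  have SigV: "Sig \<subseteq> V" using sV Sig_def by blast
  have Ucell: "\<And>i. i \<in> {1..k} \<Longrightarrow> U i = {z \<in> V. \<forall>s'\<in>Sig. D (s i) z \<le> D s' z}"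
    using sol unfolding is_solution_def cell_def Sig_def by blast
  define a where "a = s 1"
  have aSig: "a \<in> Sig" using k1' a_def Sig_def by blast
  have aV: "a \<in> V" using sV k1' a_def by blast
  have xnot: "\<And>j. j \<in> {1..k} \<Longrightarrow> j \<noteq> 1 \<Longrightarrow> x \<notin> U j" using xW unfolding Wset_def by blast
  have Wx: "\<And>j. j \<in> {1..k} \<Longrightarrow> j \<noteq> 1 \<Longrightarrow> \<not> (\<forall>s'\<in>Sig. D (s j) x \<le> D s' x)"
    using xnot Ucell xV by blast
  have min_ax: "\<forall>s'\<in>Sig. D a x \<le> D s' x" using xW Ucell[OF k1'] a_def unfolding Wset_def by blast
  have min_ay: "\<forall>s'\<in>Sig. D a y \<le> D s' y" using yU Ucell[OF k1'] a_def by blast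
  obtain t where t: "t \<in> {1..k}" "t \<noteq> 1" "y \<in> U t" using yU unfolding Wset_def by blast
  have min_ty: "\<forall>s'\<in>Sig. D (s t) y \<le> D s' y" using t Ucell by blast
  have tSig: "s t \<in> Sig" using t Sig_def by blast
  have tV: "s t \<in> V" using sV t by blast
  have key: "\<And>c. c \<in> A \<Longrightarrow> D c y \<le> D a y \<Longrightarrow> \<forall>s'\<in>Sig. D c x \<le> D s' x"
  proof -
    fix c assume c: "c \<in> A" "D c y \<le> D a y"
    show "\<forall>s'\<in>Sig. D c x \<le> D s' x"
    proof (cases "a \<in> A")
      case True
      then have "D c x \<le> D a x" using F_ii[OF c(1)] F_ii[OF True] c(2) by simp
      then show ?thesis using min_ax by force
    next
      case False
            have "D a x = D a y + lam" using F_iii'[of a] False aV by simp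
      moreover have "D c x = D c y - lam" using F_ii[OF c(1)] by simp
      ultimately have "D c x \<le> D a x" using c(2) lam_pos by simp
      then show ?thesis using min_ax by force
    qed
  qed
  have aA: "a \<in> A"
  proof (rule ccontr)
    assume "a \<notin> A"
    then have "D a x = D a y + lam" using F_iii'[of a] aV by simp
    moreover have "D (s t) x \<le> D (s t) y + lam" using D_lip[OF tV yV xV] xyE by (simp add: insert_commute)
    moreover have "D (s t) y \<le> D a y" using min_ty aSig by blast
    ultimately have "D (s t) x \<le> D a x" by simp
    then have "\<forall>s'\<in>Sig. D (s t) x \<le> D s' x" using min_ax by force
    then show False using Wx t by blast
  qed
  have tB: "s t \<in> V - A"
  proof -
    have "s t \<notin> A"
    proof
      assume "s t \<in> A"
      then have "\<forall>s'\<in>Sig. D (s t) x \<le> D s' x" using key min_ty aSig by blast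
      then show False using Wx t by blast
    qed
    then show ?thesis using tV by blast
  qed
  have notB_A: "\<And>c z. c \<in> Sig \<Longrightarrow> c \<in> V - A \<Longrightarrow> z \<in> A \<Longrightarrow> D a z < D c z"
  proof -
    fix c z assume c: "c \<in> Sig" "c \<in> V - A" and z: "z \<in> A"
    have zV: "z \<in> V" using z AV by auto
    have "D c z = D c y + lam + D x z" using F_iii[OF c(2) z] .
    moreover have "D a y \<le> D c y" using min_ay c by blast
    moreover have "D a y = D a x + lam" using F_ii[OF aA] .
    moreover have "D a z \<le> D a x + D x z" using D_tri[OF aV xV zV] .
    ultimately show "D a z < D c z" using lam_pos by simp
  qed
  define pi where "pi = (\<lambda>z. if z = y' then y else z)"
  have cell2: "\<And>c z. c \<in> Sig \<Longrightarrow> z \<in> V2 \<Longrightarrow>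
      (\<forall>s'\<in>Sig. D2 c z \<le> D2 s' z) \<longleftrightarrow> ((\<forall>s'\<in>Sig. D c (pi z) \<le> D s' (pi z)) \<and> ((c \<in> A) = (z \<in> insert y' A)))"
  proof -
    fix c z assume c: "c \<in> Sig" and z: "z \<in> V2"
    have piV: "pi z \<in> V" using z by (auto simp: pi_def V2 yV)
    have "\<exists>m\<in>Sig. (m \<in> A) = (z \<in> insert y' A) \<and> (\<forall>s'\<in>Sig. D m (pi z) \<le> D s' (pi z))"
    proof -
      obtain j where j: "j \<in> {1..k}" "pi z \<in> U j" using inst piV unfolding gen_instance_def by blast
      have jm: "\<forall>s'\<in>Sig. D (s j) (pi z) \<le> D s' (pi z)" using Ucell[OF j(1)] j(2) by blast
      have jSig: "s j \<in> Sig" using j Sig_def by blast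
      show ?thesis
      proof (cases "(s j \<in> A) = (z \<in> insert y' A)")
        case True then show ?thesis using jm jSig by blast
      next
        case False
        show ?thesis
        proof (cases "z \<in> insert y' A")
          case True
          then have sjB: "s j \<in> V - A" using False sV j by blast
          show ?thesis
          proof (cases "z = y'")
            case True
            then show ?thesis using aA aSig min_ay by (auto simp: pi_def)
          next
            case False
            then have zA: "z \<in> A" "pi z = z" using \<open>z \<in> insert y' A\<close> by (auto simp: pi_def)
            have "D a z < D (s j) z" using notB_A[OF jSig sjB zA(1)] .
            moreover have "D (s j) z \<le> D a z" using jm aSig zA by auto
            ultimately show ?thesis by simp
          qed
        next
          case False
          then have zB: "z \<in> V - A" "pi z = z" "z \<noteq> y'" using z by (auto simp: pi_def V2)
          have sjA: "s j \<in> A" using False \<open>(s j \<in> A) \<noteq> (z \<in> insert y' A)\<close> by blast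
          have "D (s t) z \<le> D (s t) y + D y z" using D_tri[OF tV yV] zB by blast
          also have "\<dots> \<le> D (s j) y + D y z" using min_ty jSig by simp
          also have "\<dots> = D (s j) z" using F_i[OF sjA zB(1)] by simp
          finally have "\<forall>s'\<in>Sig. D (s t) (pi z) \<le> D s' (pi z)" using jm zB by force
          then show ?thesis using tSig tB False by blast
        qed
      qed
    qed
    then obtain m where m: "m \<in> Sig" "(m \<in> A) = (z \<in> insert y' A)" "\<forall>s'\<in>Sig. D m (pi z) \<le> D s' (pi z)"
      by blast
    have eq: "\<And>s'. s' \<in> Sig \<Longrightarrow> D2 s' z = D s' (pi z) + (if (s' \<in> A) = (z \<in> insert y' A) then 0 else eps)"
      using D2_eq SigV z by (auto simp: g_def pi_def)
    have "(\<forall>s'\<in>Sig. D2 c z \<le> D2 s' z) \<longleftrightarrow>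
       (\<forall>s'\<in>Sig. D c (pi z) + (if (c \<in> A) = (z \<in> insert y' A) then 0 else eps)
          \<le> D s' (pi z) + (if (s' \<in> A) = (z \<in> insert y' A) then 0 else eps))"
      using eq c by auto
    also have "\<dots> \<longleftrightarrow> ((\<forall>s'\<in>Sig. D c (pi z) \<le> D s' (pi z)) \<and> ((c \<in> A) = (z \<in> insert y' A)))"
      by (rule min_shift[where P="\<lambda>s'. (s' \<in> A) = (z \<in> insert y' A)" and f="\<lambda>s'. D s' (pi z)"
            and d="\<lambda>s'. if (s' \<in> A) = (z \<in> insert y' A) then 0 else eps", OF m _ eps c]) simp
    finally show "(\<forall>s'\<in>Sig. D2 c z \<le> D2 s' z) \<longleftrightarrow> ((\<forall>s'\<in>Sig. D c (pi z) \<le> D s' (pi z)) \<and> ((c \<in> A) = (z \<in> insert y' A)))" .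
  qed
  have cellD2: "\<And>c. cell V2 E2 l2 c Sig = {z \<in> V2. (\<forall>s'\<in>Sig. D2 c z \<le> D2 s' z)}"
    unfolding cell_def by simp
  show ?thesis
    unfolding is_solution_def
  proof (intro ballI conjI)
    fix i assume i: "i \<in> {1..k}"
    show "s i \<in> S i" using sol i unfolding is_solution_def by blast
    have ci: "s i \<in> Sig" using i Sig_def by blast
    have ciV: "s i \<in> V" using sV i by blast
    show "(U(1 := exp_U1 V E U x y y')) i = cell V2 E2 l2 (s i) (s ` {1..k})"
    proof (cases "i = 1")
      case True
      have "cell V2 E2 l2 a Sig = insert y' (U 1 \<inter> A)"
      proof (rule set_eqI)
        fix z
        show "z \<in> cell V2 E2 l2 a Sig \<longleftrightarrow> z \<in> insert y' (U 1 \<inter> A)"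
        proof (cases "z = y'")
          case True
          then show ?thesis using cell2[OF aSig, of z] min_ay aA y'V2
            by (auto simp: cellD2 pi_def)
        next
          case False
          have "z \<in> cell V2 E2 l2 a Sig \<longleftrightarrow> z \<in> V2 \<and> (\<forall>s'\<in>Sig. D a z \<le> D s' z) \<and> z \<in> A"
            using cell2[OF aSig, of z] False aA by (auto simp: cellD2 pi_def)
          also have "\<dots> \<longleftrightarrow> z \<in> U 1 \<inter> A" using Ucell[OF k1'] a_def False AV by (auto simp: V2)
          finally show ?thesis using False by simp
        qed
      qed
      then show ?thesis using True a_def Sig_def by (simp add: exp_U1_def A_def)
    next
      case False
      have "cell V2 E2 l2 (s i) Sig = U i"
      proof (rule set_eqI)
        fix z
        show "z \<in> cell V2 E2 l2 (s i) Sig \<longleftrightarrow> z \<in> U i"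
        proof
          assume z: "z \<in> cell V2 E2 l2 (s i) Sig"
          then have zV2: "z \<in> V2" and h: "(\<forall>s'\<in>Sig. D (s i) (pi z) \<le> D s' (pi z)) \<and> ((s i \<in> A) = (z \<in> insert y' A))"
            using cell2[OF ci] by (auto simp: cellD2)
          show "z \<in> U i"
          proof (cases "z = y'")
            case True
            then have "s i \<in> A" "D (s i) y \<le> D a y" using h aSig by (auto simp: pi_def)
            then have "\<forall>s'\<in>Sig. D (s i) x \<le> D s' x" using key by blast
            then show ?thesis using Wx i False by blast
          next
            case False
            then show ?thesis using h zV2 Ucell[OF i] by (auto simp: pi_def V2)
          qed
        next
          assume z: "z \<in> U i"
          then have zV: "z \<in> V" and zm: "\<forall>s'\<in>Sig. D (s i) z \<le> D s' z" using Ucell[OF i] by auto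
          have zy': "z \<noteq> y'" using zV fresh by auto
          have side_ok: "(s i \<in> A) = (z \<in> A)"
          proof (rule ccontr)
            assume ns: "(s i \<in> A) \<noteq> (z \<in> A)"
            show False
            proof (cases "s i \<in> A")
              case True
              then have zB: "z \<in> V - A" using ns zV by blast
              have "D (s i) y + D y z \<le> D a y + D y z"
              proof -
                have "D (s i) z \<le> D a z" using zm aSig by blast
                then show ?thesis using F_i[OF True zB] F_i[OF aA zB] by simp
              qed
              then have "D (s i) y \<le> D a y" by simp
              then have "\<forall>s'\<in>Sig. D (s i) x \<le> D s' x" using key True by blast
              then show False using Wx i \<open>i \<noteq> 1\<close> by blast
            next
              case False
              then have "z \<in> A" "s i \<in> V - A" using ns ciV by auto
              then have "D a z < D (s i) z" using notB_A ci by blast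
              then show False using zm aSig by force
            qed
          qed
          have zV2: "z \<in> V2" using zV VV2 by blast
          have "\<forall>s'\<in>Sig. D2 (s i) z \<le> D2 s' z"
            using cell2[OF ci zV2] zm side_ok zy' by (simp add: pi_def)
          then show "z \<in> cell V2 E2 l2 (s i) Sig" using zV2 cellD2 by blast
        qed
      qed
      then show ?thesis using False Sig_def by simp
    qed
  qed
qed

end
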